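(* Let $M\ge 2$, let $\gamma_1,\dots,\gamma_{M-1}$ be nonzero real numbers and $J_1,\dots,J_{M-1}$ real numbers, and consider on the open chain of $M$ sites $$H_{\gamma J}=\sum_{m=1}^{M-1}\Big(J_m c_{m+1}^\dagger c_m\sigma_{m+1}^+ + \text{h.c.}\Big) - \sum_{m=1}^{M-1}\Big(\gamma_m c_{m+1}^\dagger c_m + \text{h.c.}\Big).$$ Let $1\le Q\le M$ be an integer such that $Q$ is even or $M$ is odd. Then the subspace of states with exactly $Q$ fermions and spin on site $1$ equal to $|\uparrow\rangle$ contains at least $2^{M-1}$ linearly independent states $|\Psi\rangle$ with $H_{\gamma J}|\Psi\rangle=0$.
   Context: Each site $m$ carries one spinless fermion mode ($c_m,c_m^\dagger$, canonical anticommutation relations) and one spin-$1/2$ with Pauli matrices $\sigma_m^{x,y,z}$; $\sigma_m^{\pm}=\sigma_m^x\pm i\sigma_m^y$. $H_{\gamma J}$ conserves the total fermion number $Q=\sum_m c_m^\dagger c_m$ and does not act on the spin at site $1$. *)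

theory Defs
  imports Complex_Main
begin

(* Sites are 1..M.  A basis configuration is a pair (n, s): n k = fermion occupation of
   site k, s k = True iff the spin at site k is up. *)
type_synonym cfg = "(nat \<Rightarrow> bool) \<times> (nat \<Rightarrow> bool)"
type_synonym state = "cfg \<Rightarrow> complex"

definition valid_cfg :: "nat \<Rightarrow> cfg \<Rightarrow> bool" where
  "valid_cfg M x \<longleftrightarrow> (\<forall>k. k \<notin> {1..M} \<longrightarrow> \<not> fst x k \<and> \<not> snd x k)"

definition jw_sign :: "(nat \<Rightarrow> bool) \<Rightarrow> nat \<Rightarrow> complex" where
  "jw_sign n m = (-1) ^ card {k. 1 \<le> k \<and> k < m \<and> n k}"

definition c_ann :: "nat \<Rightarrow> state \<Rightarrow> state" where
  "c_ann m \<psi> = (\<lambda>(n, s). if n m then 0 else jw_sign n m * \<psi> (n(m := True), s))"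

definition c_cre :: "nat \<Rightarrow> state \<Rightarrow> state" where
  "c_cre m \<psi> = (\<lambda>(n, s). if n m then jw_sign n m * \<psi> (n(m := False), s) else 0)"

definition sig_x :: "nat \<Rightarrow> state \<Rightarrow> state" where
  "sig_x m \<psi> = (\<lambda>(n, s). \<psi> (n, s(m := \<not> s m)))"

definition sig_y :: "nat \<Rightarrow> state \<Rightarrow> state" where
  "sig_y m \<psi> = (\<lambda>(n, s). (if s m then - \<i> else \<i>) * \<psi> (n, s(m := \<not> s m)))"

definition sig_z :: "nat \<Rightarrow> state \<Rightarrow> state" where
  "sig_z m \<psi> = (\<lambda>(n, s). (if s m then 1 else -1) * \<psi> (n, s))"

definition sig_plus :: "nat \<Rightarrow> state \<Rightarrow> state" where
  "sig_plus m \<psi> = (\<lambda>x. sig_x m \<psi> x + \<i> * sig_y m \<psi> x)"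

definition sig_minus :: "nat \<Rightarrow> state \<Rightarrow> state" where
  "sig_minus m \<psi> = (\<lambda>x. sig_x m \<psi> x - \<i> * sig_y m \<psi> x)"

(* H_{\<gamma>J}; the hermitian conjugates use that \<gamma>, J are real and that
   (c_{m+1}^\<dagger> c_m \<sigma>^+_{m+1})^\<dagger> = \<sigma>^-_{m+1} c_m^\<dagger> c_{m+1} = c_m^\<dagger> c_{m+1} \<sigma>^-_{m+1} *)
definition H_gJ :: "nat \<Rightarrow> (nat \<Rightarrow> real) \<Rightarrow> (nat \<Rightarrow> real) \<Rightarrow> state \<Rightarrow> state" where
  "H_gJ M \<gamma> J \<psi> = (\<lambda>x.
     (\<Sum>m\<in>{1..<M}.
        complex_of_real (J m) * c_cre (m+1) (c_ann m (sig_plus (m+1) \<psi>)) x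
      + complex_of_real (J m) * c_cre m (c_ann (m+1) (sig_minus (m+1) \<psi>)) x)
   - (\<Sum>m\<in>{1..<M}.
        complex_of_real (\<gamma> m) * c_cre (m+1) (c_ann m \<psi>) x
      + complex_of_real (\<gamma> m) * c_cre m (c_ann (m+1) \<psi>) x))"

definition sector :: "nat \<Rightarrow> nat \<Rightarrow> state set" where
  "sector M Q = {\<psi>. \<forall>x. \<psi> x \<noteq> 0 \<longrightarrow>
      valid_cfg M x \<and> card {k\<in>{1..M}. fst x k} = Q \<and> snd x 1}"

definition lin_indep :: "state set \<Rightarrow> bool" where
  "lin_indep B \<longleftrightarrow> finite B \<and>
     (\<forall>u :: state \<Rightarrow> complex. (\<forall>x. (\<Sum>v\<in>B. u v * v x) = 0) \<longrightarrow> (\<forall>v\<in>B. u v = 0))"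

end

theory Submission
  imports Defs "HOL-Library.Function_Algebras"
begin


definition sc :: "complex \<Rightarrow> state \<Rightarrow> state" where "sc c f = (\<lambda>x. c * f x)"

interpretation vs: vector_space sc
  by unfold_locales (auto simp: sc_def fun_eq_iff algebra_simps)

lemma sum_fun_app: "(sum f A) x = (\<Sum>a\<in>A. f a x)"
  by (induct A rule: infinite_finite_induct) auto

definition ind :: "cfg \<Rightarrow> state" where "ind y = (\<lambda>x. if x = y then 1 else 0)"

lemma inj_ind: "inj ind"
  unfolding inj_def ind_def fun_eq_iff by (metis one_neq_zero)

lemma span_ind: assumes fS: "finite S" shows "vs.span (ind ` S) = {\<psi>. \<forall>x. \<psi> x \<noteq> 0 \<longrightarrow> x \<in> S}"
proof (rule equalityI)
  show "vs.span (ind ` S) \<subseteq> {\<psi>. \<forall>x. \<psi> x \<noteq> 0 \<longrightarrow> x \<in> S}"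
  proof (rule vs.span_minimal)
    show "ind ` S \<subseteq> {\<psi>. \<forall>x. \<psi> x \<noteq> 0 \<longrightarrow> x \<in> S}"
      by (auto simp: ind_def split: if_splits)
    show "vs.subspace {\<psi>. \<forall>x. \<psi> x \<noteq> 0 \<longrightarrow> x \<in> S}"
      unfolding vs.subspace_def sc_def
      by (auto simp: fun_eq_iff) (metis add.right_neutral add_0)
  qed
  show "{\<psi>. \<forall>x. \<psi> x \<noteq> 0 \<longrightarrow> x \<in> S} \<subseteq> vs.span (ind ` S)"
  proof
    fix \<psi> :: state assume h: "\<psi> \<in> {\<psi>. \<forall>x. \<psi> x \<noteq> 0 \<longrightarrow> x \<in> S}"
    have "\<psi> = (\<Sum>y\<in>S. sc (\<psi> y) (ind y))"
      using h fS by (auto simp: fun_eq_iff sum_fun_app sc_def ind_def if_distrib cong: if_cong)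
    also have "\<dots> \<in> vs.span (ind ` S)"
      by (intro vs.span_sum vs.span_scale vs.span_base) auto
    finally show "\<psi> \<in> vs.span (ind ` S)" .
  qed
qed

lemma indep_ind: "vs.independent (ind ` S)"
  unfolding vs.independent_explicit_module
proof (intro allI impI)
  fix t u v assume t: "finite t" "t \<subseteq> ind ` S" and s: "(\<Sum>v\<in>t. sc (u v) v) = 0" and v: "v \<in> t"
  then obtain y where y: "v = ind y" by auto
  have "0 = (\<Sum>v\<in>t. sc (u v) v) y" using s by simp
  also have "\<dots> = (\<Sum>w\<in>t. u w * w y)" by (simp add: sum_fun_app sc_def)
  also have "\<dots> = u v * v y + (\<Sum>w\<in>t-{v}. u w * w y)" using t v by (simp add: sum.remove)
  also have "(\<Sum>w\<in>t-{v}. u w * w y) = 0"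
  proof (rule sum.neutral, rule ballI)
    fix w assume "w \<in> t - {v}"
    then obtain z where z: "w = ind z" using t by auto
    with \<open>w \<in> t - {v}\<close> y have "z \<noteq> y" by auto
    with z show "u w * w y = 0" by (simp add: ind_def)
  qed
  finally show "u v = 0" using y by (simp add: ind_def)
qed

lemma disj_span:
  assumes ind: "vs.independent BB" and f: "finite BB" and KC: "K \<subseteq> BB" "C \<subseteq> BB" "K \<inter> C = {}"
    and x: "x \<in> vs.span K" "x \<in> vs.span C"
  shows "x = 0"
proof -
  have fK: "finite K" "finite C" using finite_subset[OF KC(1) f] finite_subset[OF KC(2) f] by auto
  obtain a where a: "x = (\<Sum>v\<in>K. sc (a v) v)" using x(1) vs.span_finite[OF fK(1)] by auto
  obtain b where b: "x = (\<Sum>v\<in>C. sc (b v) v)" using x(2) vs.span_finite[OF fK(2)] by auto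
  define g where "g v = (if v \<in> K then a v else - b v)" for v
  have "(\<Sum>v\<in>K \<union> C. sc (g v) v) = (\<Sum>v\<in>K. sc (g v) v) + (\<Sum>v\<in>C. sc (g v) v)"
    using fK KC by (simp add: sum.union_disjoint)
  also have "(\<Sum>v\<in>K. sc (g v) v) = x" unfolding a g_def by simp
  also have "(\<Sum>v\<in>C. sc (g v) v) = - x" unfolding b g_def using KC
    by (auto simp: sum_negf[symmetric] intro!: sum.cong)
  finally have z: "(\<Sum>v\<in>K \<union> C. sc (g v) v) = 0" by (simp only: add.right_inverse)
  have "\<forall>v\<in>K. a v = 0"
  proof
    fix v assume "v \<in> K"
    from vs.independentD[OF ind _ _ z, of v] fK KC \<open>v \<in> K\<close> show "a v = 0" by (auto simp: g_def)
  qed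
  then show ?thesis unfolding a by simp
qed

lemma kernel_bound:
  fixes H :: "state \<Rightarrow> state" and E Od :: "cfg set"
  assumes hom: "module_hom sc sc H" and fE: "finite E" and fO: "finite Od"
    and maps: "\<And>\<psi>. \<forall>x. \<psi> x \<noteq> 0 \<longrightarrow> x \<in> E \<Longrightarrow> \<forall>x. H \<psi> x \<noteq> 0 \<longrightarrow> x \<in> Od"
  shows "\<exists>K. (\<forall>\<psi>\<in>K. \<forall>x. \<psi> x \<noteq> 0 \<longrightarrow> x \<in> E) \<and> lin_indep K \<and> card E \<le> card K + card Od
             \<and> (\<forall>\<psi>\<in>K. H \<psi> = (\<lambda>_. 0))"
proof -
  define V where "V = vs.span (ind ` E)"
  have V: "V = {\<psi>. \<forall>x. \<psi> x \<noteq> 0 \<longrightarrow> x \<in> E}" unfolding V_def by (rule span_ind[OF fE])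
  define K0 where "K0 = {v\<in>V. H v = 0}"
  obtain K where K: "K \<subseteq> K0" "vs.independent K" "K0 \<subseteq> vs.span K" "card K = vs.dim K0"
    by (rule vs.basis_exists)
  have "K \<subseteq> V" using K(1) unfolding K0_def by blast
  then obtain BB where BB: "K \<subseteq> BB" "BB \<subseteq> V" "vs.independent BB" "V \<subseteq> vs.span BB"
    using K(2) by (rule vs.maximal_independent_subset_extend)
  have fBB: "finite BB"
    using vs.independent_span_bound[of "ind ` E" BB] fE BB(2,3) unfolding V_def by blast
  have "ind ` E \<subseteq> vs.span BB" using BB(4) vs.span_superset[of "ind ` E"] unfolding V_def by blast
  then have "card (ind ` E) \<le> card BB"
    using vs.independent_span_bound[of BB "ind ` E", OF fBB indep_ind] by blast
  then have cE: "card E \<le> card BB" using card_image[OF inj_on_subset[OF inj_ind]] by simp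
  define C where "C = BB - K"
  have fC: "finite C" "finite K" using fBB finite_subset[OF BB(1) fBB] unfolding C_def by auto
  have cBB: "card BB = card K + card C"
    unfolding C_def using fBB BB(1) fC by (simp add: card_Diff_subset card_mono)
  have sV: "vs.subspace V" unfolding V_def by simp
  have spC: "vs.span C \<subseteq> V" using BB(2) sV unfolding C_def by (intro vs.span_minimal) auto
  have injC: "inj_on H (vs.span C)"
  proof (subst module_hom.inj_on_iff_eq_0[OF hom], simp, intro ballI impI)
    fix x assume x: "x \<in> vs.span C" "H x = 0"
    then have "x \<in> K0" using spC unfolding K0_def by blast
    then have "x \<in> vs.span K" using K by blast
    then show "x = 0" using disj_span[OF BB(3) fBB BB(1), of C x] x unfolding C_def by blast
  qed
  have indHC: "vs.independent (H ` C)"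
    using module_hom.independent_injective_image[OF hom, of C] injC BB(3)
      vs.independent_mono[of BB C] unfolding C_def by blast
  have "H ` C \<subseteq> vs.span (ind ` Od)"
  proof
    fix y assume "y \<in> H ` C"
    then obtain c where c: "c \<in> C" "y = H c" by blast
    then have "c \<in> V" using BB(2) unfolding C_def by blast
    then have "\<forall>x. c x \<noteq> 0 \<longrightarrow> x \<in> E" unfolding V by blast
    then have "\<forall>x. H c x \<noteq> 0 \<longrightarrow> x \<in> Od" by (rule maps)
    then show "y \<in> vs.span (ind ` Od)" using c span_ind[OF fO] by simp
  qed
  then have "card (H ` C) \<le> card (ind ` Od)"
    using vs.independent_span_bound[of "ind ` Od" "H ` C"] fO indHC by blast
  moreover have "card (H ` C) = card C"
    using card_image[OF inj_on_subset[OF injC vs.span_superset]] .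
  moreover have "card (ind ` Od) = card Od" using card_image[OF inj_on_subset[OF inj_ind]] by simp
  ultimately have cC: "card C \<le> card Od" by simp
  show ?thesis
  proof (intro exI conjI)
    show "\<forall>\<psi>\<in>K. \<forall>x. \<psi> x \<noteq> 0 \<longrightarrow> x \<in> E" using K(1) unfolding K0_def V by blast
    show "\<forall>\<psi>\<in>K. H \<psi> = (\<lambda>_. 0)" using K(1) unfolding K0_def zero_fun_def by blast
    show "card E \<le> card K + card Od" using cE cBB cC by simp
    show "lin_indep K"
      unfolding lin_indep_def
    proof (intro conjI allI impI ballI)
      show "finite K" by (fact fC(2))
      fix u v assume h: "\<forall>x. (\<Sum>v\<in>K. u v * v x) = 0" and v: "v \<in> K"
      have "(\<Sum>v\<in>K. sc (u v) v) = 0" using h by (simp add: fun_eq_iff sum_fun_app sc_def)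
      from vs.independentD[OF K(2) fC(2) subset_refl this v] show "u v = 0" .
    qed
  qed
qed



lemma c_ann_hom: "c_ann m (f + g) = c_ann m f + c_ann m g" "c_ann m (sc r f) = sc r (c_ann m f)"
  by (auto simp: c_ann_def sc_def fun_eq_iff algebra_simps)
lemma c_cre_hom: "c_cre m (f + g) = c_cre m f + c_cre m g" "c_cre m (sc r f) = sc r (c_cre m f)"
  by (auto simp: c_cre_def sc_def fun_eq_iff algebra_simps)
lemma sig_plus_hom: "sig_plus m (f + g) = sig_plus m f + sig_plus m g" "sig_plus m (sc r f) = sc r (sig_plus m f)"
  by (auto simp: sig_plus_def sig_x_def sig_y_def sc_def fun_eq_iff algebra_simps)
lemma sig_minus_hom: "sig_minus m (f + g) = sig_minus m f + sig_minus m g" "sig_minus m (sc r f) = sc r (sig_minus m f)"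
  by (auto simp: sig_minus_def sig_x_def sig_y_def sc_def fun_eq_iff algebra_simps)

lemma H_hom: "module_hom sc sc (H_gJ M \<gamma> J)"
proof -
  have mod: "module sc" using vs.vector_space_axioms by (simp add: module_iff_vector_space)
  show ?thesis
  proof (rule module_hom.intro[OF mod mod], unfold_locales)
    fix f g :: state
    show "H_gJ M \<gamma> J (f + g) = H_gJ M \<gamma> J f + H_gJ M \<gamma> J g"
      by (simp add: H_gJ_def fun_eq_iff c_ann_hom c_cre_hom sig_plus_hom sig_minus_hom
            sum.distrib[symmetric] algebra_simps)
  next
    fix r and f :: state
    show "H_gJ M \<gamma> J (sc r f) = sc r (H_gJ M \<gamma> J f)"
      unfolding H_gJ_def c_ann_hom c_cre_hom sig_plus_hom sig_minus_hom
      by (simp add: fun_eq_iff sum_distrib_left sc_def algebra_simps)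
  qed
qed

definition Eb :: "nat \<Rightarrow> nat \<Rightarrow> bool \<Rightarrow> cfg set" where
  "Eb M Q b = {x. valid_cfg M x \<and> card {k\<in>{1..M}. fst x k} = Q \<and> snd x 1
      \<and> even (\<Sum>{k\<in>{1..M}. fst x k}) = b}"

lemma move:
  assumes na: "n a" and nb: "\<not> n b" and ab: "a \<in> {1..M}" "b \<in> {1..M}" "a = Suc b \<or> b = Suc a"
    and c: "c \<noteq> 1" "c \<in> {1..M}" and s': "\<forall>k. k \<noteq> c \<longrightarrow> s' k = s k"
    and E: "(n(a:=False, b:=True), s') \<in> Eb M Q \<beta>"
  shows "(n,s) \<in> Eb M Q (\<not> \<beta>)"
proof -
  define N where "N = {k\<in>{1..M}. n k}"
  have neq: "a \<noteq> b" using ab by auto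
  have N': "{k\<in>{1..M}. (n(a:=False, b:=True)) k} = insert b (N - {a})"
    using ab neq unfolding N_def by auto
  have fN: "finite N" unfolding N_def by simp
  have aN: "a \<in> N" "b \<notin> N" using na nb ab unfolding N_def by auto
  have pos: "card N > 0" using fN aN(1) card_gt_0_iff by blast
  have cardN: "card (insert b (N - {a})) = card N"
    using fN aN pos by (simp add: card_Diff_singleton)
  have s1: "\<Sum>(insert b (N - {a})) = b + \<Sum>(N - {a})" using fN aN by simp
  have s2: "\<Sum>N = a + \<Sum>(N - {a})" using fN aN by (simp add: sum.remove)
  have EE: "valid_cfg M (n(a:=False, b:=True), s') \<and> card {k\<in>{1..M}. (n(a:=False, b:=True)) k} = Q \<and> s' 1
     \<and> even (\<Sum>{k\<in>{1..M}. (n(a:=False, b:=True)) k}) = \<beta>"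
    using E unfolding Eb_def by simp
  then have vE: "valid_cfg M (n(a:=False, b:=True), s')" "card (insert b (N - {a})) = Q" "s' 1"
     "even (\<Sum>(insert b (N - {a}))) = \<beta>"
    unfolding N' by blast+
  have valid: "valid_cfg M (n, s)"
    unfolding valid_cfg_def
  proof (intro allI impI)
    fix k assume k: "k \<notin> {1..M}"
    then have kk: "k \<noteq> a" "k \<noteq> b" "k \<noteq> c" using ab c by auto
    have "\<not> (n(a:=False, b:=True)) k \<and> \<not> s' k" using vE(1) k unfolding valid_cfg_def by simp
    then show "\<not> fst (n, s) k \<and> \<not> snd (n, s) k" using kk s' by simp
  qed
  have "s' 1 = s 1" using s' c(1) by simp
  then have sp: "s 1" using vE(3) by simp
  have par: "even (\<Sum>N) = (\<not> \<beta>)"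
  proof -
    have "even (b + \<Sum>(N - {a})) = \<beta>" using vE(4) s1 by simp
    then show ?thesis unfolding s2 using ab(3) by auto
  qed
  have "card N = Q" using vE(2) cardN by simp
  then show ?thesis using valid sp par unfolding Eb_def N_def by simp
qed

lemma hop_zero:
  assumes "a \<noteq> b" and Z: "\<And>s'. n a \<Longrightarrow> \<not> n b \<Longrightarrow> (\<forall>k. k \<noteq> c \<longrightarrow> s' k = s k) \<Longrightarrow> \<psi> (n(a:=False, b:=True), s') = 0"
  shows "c_cre a (c_ann b \<psi>) (n,s) = 0" "c_cre a (c_ann b (sig_plus c \<psi>)) (n,s) = 0"
    "c_cre a (c_ann b (sig_minus c \<psi>)) (n,s) = 0"
proof -
  have z1: "n a \<Longrightarrow> \<not> n b \<Longrightarrow> \<psi> (n(a:=False, b:=True), s) = 0" using Z[of s] by simp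
  have z2: "n a \<Longrightarrow> \<not> n b \<Longrightarrow> \<psi> (n(a:=False, b:=True), s(c := \<not> s c)) = 0" using Z[of "s(c := \<not> s c)"] by simp
  show "c_cre a (c_ann b \<psi>) (n,s) = 0" "c_cre a (c_ann b (sig_plus c \<psi>)) (n,s) = 0"
    "c_cre a (c_ann b (sig_minus c \<psi>)) (n,s) = 0"
    using z1 z2 assms(1) by (auto simp: c_cre_def c_ann_def sig_plus_def sig_minus_def sig_x_def sig_y_def)
qed

lemma H_maps:
  assumes hyp: "\<forall>x. \<psi> x \<noteq> 0 \<longrightarrow> x \<in> Eb M Q \<beta>"
  shows "\<forall>x. H_gJ M \<gamma> J \<psi> x \<noteq> 0 \<longrightarrow> x \<in> Eb M Q (\<not> \<beta>)"
proof (intro allI impI, rule ccontr)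
  fix x assume H: "H_gJ M \<gamma> J \<psi> x \<noteq> 0" and nx: "x \<notin> Eb M Q (\<not> \<beta>)"
  obtain n s where xs: "x = (n, s)" by (cases x)
  have Z: "\<psi> (n(a:=False, b:=True), s') = 0"
    if "n a" "\<not> n b" "a \<in> {1..M}" "b \<in> {1..M}" "a = Suc b \<or> b = Suc a" "c \<noteq> 1" "c \<in> {1..M}"
       "\<forall>k. k \<noteq> c \<longrightarrow> s' k = s k" for a b c s'
  proof (rule ccontr)
    assume "\<psi> (n(a:=False, b:=True), s') \<noteq> 0"
    then have "(n(a:=False, b:=True), s') \<in> Eb M Q \<beta>" using hyp by blast
    from move[OF that this] nx xs show False by simp
  qed
  have T: "c_cre (m+1) (c_ann m (sig_plus (m+1) \<psi>)) (n,s) = 0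
       \<and> c_cre m (c_ann (m+1) (sig_minus (m+1) \<psi>)) (n,s) = 0
       \<and> c_cre (m+1) (c_ann m \<psi>) (n,s) = 0 \<and> c_cre m (c_ann (m+1) \<psi>) (n,s) = 0"
    if m: "m \<in> {1..<M}" for m
  proof -
    have A: "\<psi> (n(m+1:=False, m:=True), s') = 0"
      if "n (m+1)" "\<not> n m" "\<forall>k. k \<noteq> m+1 \<longrightarrow> s' k = s k" for s'
      by (rule Z) (use m that in auto)
    have B: "\<psi> (n(m:=False, m+1:=True), s') = 0"
      if "n m" "\<not> n (m+1)" "\<forall>k. k \<noteq> m+1 \<longrightarrow> s' k = s k" for s'
      by (rule Z) (use m that in auto)
    have "m+1 \<noteq> m" "m \<noteq> m+1" by simp_all
    note h1 = hop_zero[of "m+1" m n "m+1" s \<psi>, OF this(1) A]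
    note h2 = hop_zero[of m "m+1" n "m+1" s \<psi>, OF \<open>m \<noteq> m+1\<close> B]
    show ?thesis using h1 h2 by blast
  qed
  have S1: "(\<Sum>m\<in>{1..<M}. complex_of_real (J m) * c_cre (m + 1) (c_ann m (sig_plus (m + 1) \<psi>)) x +
         complex_of_real (J m) * c_cre m (c_ann (m + 1) (sig_minus (m + 1) \<psi>)) x) = 0"
    by (rule sum.neutral) (use T xs in simp)
  have S2: "(\<Sum>m\<in>{1..<M}. complex_of_real (\<gamma> m) * c_cre (m + 1) (c_ann m \<psi>) x +
         complex_of_real (\<gamma> m) * c_cre m (c_ann (m + 1) \<psi>) x) = 0"
    by (rule sum.neutral) (use T xs in simp)
  have "H_gJ M \<gamma> J \<psi> x = 0"
    unfolding H_gJ_def S1 S2 by simp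
  with H show False by simp
qed



definition AS :: "nat \<Rightarrow> nat \<Rightarrow> nat set set" where "AS M Q = {T. T \<subseteq> {1..M} \<and> card T = Q}"
definition dd :: "nat \<Rightarrow> nat \<Rightarrow> int" where "dd M Q = (\<Sum>T\<in>AS M Q. (-1) ^ (\<Sum>T))"
definition ff :: "nat \<Rightarrow> nat \<Rightarrow> int" where
  "ff M Q = (if even Q then (-1)^(Q div 2) * int (M div 2 choose Q div 2)
     else if even M then 0 else - ((-1)^(Q div 2) * int (M div 2 choose Q div 2)))"

lemma finite_AS: "finite (AS M Q)"
  by (rule finite_subset[of _ "Pow {1..M}"]) (auto simp: AS_def)

lemma AS_Suc: "AS (Suc M) (Suc Q) = AS M (Suc Q) \<union> insert (Suc M) ` AS M Q"
proof (rule set_eqI, rule iffI)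
  fix T assume "T \<in> AS (Suc M) (Suc Q)"
  then have T: "T \<subseteq> insert (Suc M) {1..M}" "card T = Suc Q" by (auto simp: AS_def atLeastAtMostSuc_conv)
  show "T \<in> AS M (Suc Q) \<union> insert (Suc M) ` AS M Q"
  proof (cases "Suc M \<in> T")
    case False
    then have "T \<subseteq> {1..M}" using T(1) by blast
    then show ?thesis using T(2) by (simp add: AS_def)
  next
    case True
    have f: "finite T" using T(1) finite_subset by blast
    have "T - {Suc M} \<subseteq> {1..M}" using T(1) by blast
    moreover have "card (T - {Suc M}) = Q" using T(2) True f by simp
    moreover have "T = insert (Suc M) (T - {Suc M})" using True by blast
    ultimately show ?thesis unfolding AS_def by blast
  qed
next
  fix T assume "T \<in> AS M (Suc Q) \<union> insert (Suc M) ` AS M Q"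
  then show "T \<in> AS (Suc M) (Suc Q)"
  proof
    assume "T \<in> AS M (Suc Q)" then show ?thesis by (auto simp: AS_def)
  next
    assume "T \<in> insert (Suc M) ` AS M Q"
    then obtain T' where T': "T = insert (Suc M) T'" "T' \<subseteq> {1..M}" "card T' = Q" by (auto simp: AS_def)
    have "finite T'" using T'(2) finite_subset by blast
    moreover have "Suc M \<notin> T'" using T'(2) by auto
    ultimately have "card T = Suc Q" using T' by simp
    moreover have "T \<subseteq> {1..Suc M}" using T' by auto
    ultimately show ?thesis by (simp add: AS_def)
  qed
qed

lemma dd_Suc: "dd (Suc M) (Suc Q) = dd M (Suc Q) + (-1)^(Suc M) * dd M Q"
proof -
  have disj: "AS M (Suc Q) \<inter> insert (Suc M) ` AS M Q = {}" by (auto simp: AS_def)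
  have inj: "inj_on (insert (Suc M)) (AS M Q)"
    unfolding inj_on_def AS_def
  proof (intro ballI impI)
    fix x y assume "x \<in> {T. T \<subseteq> {1..M} \<and> card T = Q}" "y \<in> {T. T \<subseteq> {1..M} \<and> card T = Q}"
      and e: "insert (Suc M) x = insert (Suc M) y"
    then have "Suc M \<notin> x" "Suc M \<notin> y" by auto
    then show "x = y" using e insert_ident by metis
  qed
  have "dd (Suc M) (Suc Q) = dd M (Suc Q) + (\<Sum>T\<in>insert (Suc M) ` AS M Q. (-1) ^ (\<Sum>T))"
    unfolding dd_def AS_Suc by (rule sum.union_disjoint) (use finite_AS disj in auto)
  also have "(\<Sum>T\<in>insert (Suc M) ` AS M Q. (-1::int) ^ (\<Sum>T)) = (\<Sum>T\<in>AS M Q. (-1) ^ (\<Sum>(insert (Suc M) T)))"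
    by (rule sum.reindex[OF inj, unfolded comp_def])
  also have "\<dots> = (\<Sum>T\<in>AS M Q. (-1)^(Suc M) * (-1) ^ (\<Sum>T))"
  proof (rule sum.cong[OF refl])
    fix T assume "T \<in> AS M Q"
    then have "finite T" "Suc M \<notin> T" using finite_subset by (auto simp: AS_def)
    then show "(-1::int) ^ (\<Sum>(insert (Suc M) T)) = (-1)^(Suc M) * (-1) ^ (\<Sum>T)"
      by (simp add: power_add)
  qed
  also have "\<dots> = (-1)^(Suc M) * dd M Q" unfolding dd_def by (simp add: sum_distrib_left)
  finally show ?thesis .
qed

lemma dd_0: "dd M 0 = 1"
proof -
  have "T = {}" if "T \<subseteq> {1..M}" "card T = 0" for T
    using finite_subset[OF that(1)] that(2) by auto
  then have "AS M 0 = {{}}" by (auto simp: AS_def)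
  then show ?thesis by (simp add: dd_def)
qed

lemma dd_0_Suc: "dd 0 (Suc Q) = 0"
proof -
  have "AS 0 (Suc Q) = {}" by (auto simp: AS_def)
  then show ?thesis by (simp add: dd_def)
qed

lemma ff_step: "ff (Suc M) (Suc q) = ff M (Suc q) + (-1)^(Suc M) * ff M q"
proof -
  obtain k where k: "M = 2*k \<or> M = 2*k+1" by (metis even_two_times_div_two odd_two_times_div_two_succ)
  obtain j where j: "q = 2*j \<or> q = 2*j+1" by (metis even_two_times_div_two odd_two_times_div_two_succ)
  from k j show ?thesis
    by (elim disjE) (simp_all add: ff_def algebra_simps)
qed

lemma dd_ff: "dd M Q = ff M Q"
proof (induction M arbitrary: Q)
  case 0
  then show ?case
  proof (cases Q)
    case 0 then show ?thesis by (simp add: dd_0 ff_def)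
  next
    case (Suc q)
    then show ?thesis by (simp add: dd_0_Suc ff_def)
  qed
next
  case (Suc M)
  then show ?case
  proof (cases Q)
    case 0 then show ?thesis by (simp add: dd_0 ff_def)
  next
    case (Suc q)
    then show ?thesis using Suc.IH by (simp add: dd_Suc ff_step)
  qed
qed



definition Ab :: "nat \<Rightarrow> nat \<Rightarrow> bool \<Rightarrow> nat set set" where
  "Ab M Q b = {T\<in>AS M Q. even (\<Sum>T) = b}"
definition Ups :: "nat \<Rightarrow> nat set set" where "Ups M = {U. U \<subseteq> {1..M} \<and> 1 \<in> U}"
definition emb :: "nat set \<times> nat set \<Rightarrow> cfg" where "emb p = ((\<lambda>k. k \<in> fst p), (\<lambda>k. k \<in> snd p))"

lemma dd_Ab: "dd M Q = int (card (Ab M Q True)) - int (card (Ab M Q False))"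
proof -
  have u: "AS M Q = Ab M Q True \<union> Ab M Q False" "Ab M Q True \<inter> Ab M Q False = {}"
    by (auto simp: Ab_def)
  have f: "finite (Ab M Q b)" for b using finite_AS by (simp add: Ab_def)
  have "dd M Q = (\<Sum>T\<in>Ab M Q True. (-1) ^ (\<Sum>T)) + (\<Sum>T\<in>Ab M Q False. (-1) ^ (\<Sum>T))"
    unfolding dd_def u(1) by (rule sum.union_disjoint) (use f u(2) in auto)
  also have "(\<Sum>T\<in>Ab M Q True. (-1::int) ^ (\<Sum>T)) = (\<Sum>T\<in>Ab M Q True. 1)"
    by (rule sum.cong) (auto simp: Ab_def)
  also have "(\<Sum>T\<in>Ab M Q False. (-1::int) ^ (\<Sum>T)) = (\<Sum>T\<in>Ab M Q False. -1)"
    by (rule sum.cong) (auto simp: Ab_def)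
  finally show ?thesis by simp
qed

lemma Eb_emb: "Eb M Q b = emb ` (Ab M Q b \<times> Ups M)"
proof (rule set_eqI, rule iffI)
  fix x assume x: "x \<in> Eb M Q b"
  obtain n s where xs: "x = (n, s)" by (cases x)
  define T where "T = {k. n k}"
  define U where "U = {k. s k}"
  have v: "\<forall>k. k \<notin> {1..M} \<longrightarrow> \<not> n k \<and> \<not> s k" using x xs by (simp add: Eb_def valid_cfg_def)
  have TT: "{k\<in>{1..M}. n k} = T" using v unfolding T_def by blast
  have "T \<in> Ab M Q b" using x xs TT v unfolding Ab_def AS_def Eb_def T_def by auto
  moreover have "U \<in> Ups M" using x xs v unfolding Ups_def Eb_def U_def by auto
  moreover have "x = emb (T, U)" unfolding xs emb_def T_def U_def by simp
  ultimately show "x \<in> emb ` (Ab M Q b \<times> Ups M)" by blast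
next
  fix x assume "x \<in> emb ` (Ab M Q b \<times> Ups M)"
  then obtain T U where TU: "T \<in> Ab M Q b" "U \<in> Ups M" "x = emb (T, U)" by blast
  have TT: "{k\<in>{1..M}. k \<in> T} = T" using TU(1) unfolding Ab_def AS_def by blast
  have x: "x = ((\<lambda>k. k\<in>T), (\<lambda>k. k\<in>U))" using TU(3) by (simp add: emb_def)
  have "valid_cfg M x" unfolding x using TU(1,2) by (auto simp: valid_cfg_def Ab_def AS_def Ups_def)
  moreover have "{k\<in>{1..M}. fst x k} = T" unfolding x using TT by simp
  moreover have "snd x 1" unfolding x using TU(2) by (simp add: Ups_def)
  moreover have "card T = Q" "even (\<Sum>T) = b" using TU(1) by (auto simp: Ab_def AS_def)
  ultimately show "x \<in> Eb M Q b" unfolding Eb_def by simp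
qed

lemma inj_emb: "inj emb"
  unfolding inj_def emb_def by (auto simp: fun_eq_iff)

lemma card_Ups: assumes "M \<ge> 1" shows "card (Ups M) = 2 ^ (M - 1)"
proof -
  have e: "Ups M = insert 1 ` Pow {2..M}"
  proof (rule set_eqI, rule iffI)
    fix U assume "U \<in> Ups M"
    then have "U - {1} \<in> Pow {2..M}" "U = insert 1 (U - {1})" by (auto simp: Ups_def)
    then show "U \<in> insert 1 ` Pow {2..M}" by blast
  next
    fix U assume "U \<in> insert 1 ` Pow {2..M}"
    then show "U \<in> Ups M" using assms by (auto simp: Ups_def)
  qed
  have "inj_on (insert 1) (Pow {2..M})"
    unfolding inj_on_def
  proof (intro ballI impI)
    fix x y assume "x \<in> Pow {2..(M::nat)}" "y \<in> Pow {2..M}" and e: "insert 1 x = insert 1 y"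
    then have "1 \<notin> x" "1 \<notin> y" by auto
    then show "x = y" using e insert_ident by metis
  qed
  then have "card (Ups M) = card (Pow {2..M})" unfolding e by (rule card_image)
  also have "\<dots> = 2 ^ (M - 1)" by (simp add: card_Pow)
  finally show ?thesis .
qed

lemma card_Eb: assumes "M \<ge> 1" shows "card (Eb M Q b) = card (Ab M Q b) * 2 ^ (M - 1)"
  "finite (Eb M Q b)"
proof -
  have fA: "finite (Ab M Q b)" using finite_AS by (simp add: Ab_def)
  have fU: "finite (Ups M)" by (rule finite_subset[of _ "Pow {1..M}"]) (auto simp: Ups_def)
  show "card (Eb M Q b) = card (Ab M Q b) * 2 ^ (M - 1)"
    unfolding Eb_emb using card_image[OF inj_on_subset[OF inj_emb subset_UNIV]] card_Ups[OF assms]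
    by (simp add: card_cartesian_product)
  show "finite (Eb M Q b)" unfolding Eb_emb using fA fU by simp
qed

theorem mainTheorem5:
  fixes M Q :: nat and \<gamma> J :: "nat \<Rightarrow> real"
  assumes "M \<ge> 2"
    and "\<forall>m\<in>{1..<M}. \<gamma> m \<noteq> 0"
    and "1 \<le> Q" and "Q \<le> M"
    and "even Q \<or> odd M"
  shows "\<exists>B. B \<subseteq> sector M Q \<and> lin_indep B \<and> card B \<ge> 2 ^ (M - 1)
             \<and> (\<forall>\<psi>\<in>B. H_gJ M \<gamma> J \<psi> = (\<lambda>_. 0))"
proof -
  have M1: "M \<ge> 1" using assms(1) by simp
  have "ff M Q \<noteq> 0"
  proof -
    have "Q div 2 \<le> M div 2" using assms(4) by (rule div_le_mono)
    then have "(M div 2 choose Q div 2) \<noteq> 0" by simp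
    then show ?thesis using assms(5) by (auto simp: ff_def)
  qed
  then have "dd M Q \<noteq> 0" by (simp add: dd_ff)
  then have ne: "card (Ab M Q True) \<noteq> card (Ab M Q False)" unfolding dd_Ab by simp
  define \<beta> where "\<beta> = (card (Ab M Q True) > card (Ab M Q False))"
  have "card (Ab M Q \<beta>) \<ge> card (Ab M Q (\<not> \<beta>)) + 1" using ne unfolding \<beta>_def
    by (cases "card (Ab M Q False) < card (Ab M Q True)") auto
  then have "card (Ab M Q \<beta>) * 2 ^ (M - 1) \<ge> (card (Ab M Q (\<not> \<beta>)) + 1) * 2 ^ (M - 1)"
    by (rule mult_right_mono) simp
  then have big: "card (Eb M Q \<beta>) \<ge> card (Eb M Q (\<not> \<beta>)) + 2 ^ (M - 1)"
    using card_Eb(1)[OF M1] by (simp add: algebra_simps)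
  have ex: "\<exists>K. (\<forall>\<psi>\<in>K. \<forall>x. \<psi> x \<noteq> 0 \<longrightarrow> x \<in> Eb M Q \<beta>) \<and> lin_indep K
      \<and> card (Eb M Q \<beta>) \<le> card K + card (Eb M Q (\<not> \<beta>)) \<and> (\<forall>\<psi>\<in>K. H_gJ M \<gamma> J \<psi> = (\<lambda>_. 0))"
    by (rule kernel_bound[OF H_hom card_Eb(2)[OF M1] card_Eb(2)[OF M1] H_maps])
  then obtain K where K: "\<forall>\<psi>\<in>K. \<forall>x. \<psi> x \<noteq> 0 \<longrightarrow> x \<in> Eb M Q \<beta>" "lin_indep K"
      "card (Eb M Q \<beta>) \<le> card K + card (Eb M Q (\<not> \<beta>))" "\<forall>\<psi>\<in>K. H_gJ M \<gamma> J \<psi> = (\<lambda>_. 0)"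
    by (elim exE conjE)
  show ?thesis
  proof (intro exI conjI)
    show "K \<subseteq> sector M Q"
    proof
      fix \<psi> assume "\<psi> \<in> K"
      then have "\<forall>x. \<psi> x \<noteq> 0 \<longrightarrow> x \<in> Eb M Q \<beta>" using K(1) by blast
      then show "\<psi> \<in> sector M Q" unfolding sector_def Eb_def mem_Collect_eq by blast
    qed
    show "lin_indep K" by (fact K(2))
    show "2 ^ (M - 1) \<le> card K" using K(3) big by simp
    show "\<forall>\<psi>\<in>K. H_gJ M \<gamma> J \<psi> = (\<lambda>_. 0)" by (fact K(4))
  qed
qed

end
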